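(* Consider the following hybrid sealed-bid auction for a single item. There are $n_A$ "integrated" bidders, each with a private value drawn independently from the uniform distribution on $[0,1]$, and a single "non-integrated" bidder with private value $v \in [0,1]$, independent of the others. All bidders simultaneously submit bids and the highest bidder wins. If the winner is integrated, it pays the second-highest bid; if the winner is the non-integrated bidder, it pays its own bid. Suppose every integrated bidder bids its true value. Then in equilibrium the non-integrated bidder with value $v$ bids $\frac{n_A}{n_A+1} v$, and its equilibrium interim expected surplus is $$S(v) = \left(\frac{n_A}{n_A+1}\right)^{n_A} \frac{v^{n_A+1}}{n_A+1},$$ whereas if this bidder were also integrated (i.e. paid the second-highest bid upon winning and bid truthfully) its interim expected surplus would be $$S(v) = \frac{v^{n_A+1}}{n_A+1}.$$ In particular, being the sole non-integrated bidder costs it a fraction $\left(\frac{n_A}{n_A+1}\right)^{n_A}$ of its surplus relative to being integrated.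
   Context: Bidders are risk neutral with quasilinear utility (value minus payment if winning, zero otherwise). Interim expected surplus means the expected utility of the bidder conditional on its own value $v$. *)

theory Defs
  imports "HOL-Probability.Probability"
begin

definition valM :: "nat \<Rightarrow> (nat \<Rightarrow> real) measure" where
  "valM n = PiM {..<n} (\<lambda>_. uniform_measure lborel {0..1::real})"

text \<open>Interim expected utility of the non-integrated bidder with value v bidding b,
  when the n integrated bidders bid truthfully: it wins iff its bid exceeds all
  integrated bids (ties have probability zero) and then pays its own bid.\<close>
definition nonint_utility :: "nat \<Rightarrow> real \<Rightarrow> real \<Rightarrow> real" where
  "nonint_utility n v b =
     (\<integral>x. (if (\<forall>i<n. x i < b) then v - b else 0) \<partial>valM n)"

text \<open>Interim expected utility of the same bidder if it were integrated and bid truthfully: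
  it wins iff its value exceeds all other bids and pays the second-highest bid,
  i.e. the highest of the other bids.\<close>
definition int_utility :: "nat \<Rightarrow> real \<Rightarrow> real" where
  "int_utility n v =
     (\<integral>x. (if (\<forall>i<n. x i < v) then v - (MAX i\<in>{..<n}. x i) else 0) \<partial>valM n)"

end

theory Submission
  imports Defs
begin

abbreviation "U \<equiv> uniform_measure lborel {0..1::real}"

lemma U_prob: "prob_space U"
  by (intro prob_space_uniform_measure) auto

lemma valM_prob: "prob_space (valM n)"
  unfolding valM_def by (intro prob_space_PiM U_prob)

lemma box: assumes "A \<in> sets borel"
  shows "emeasure (valM n) (PiE {..<n} (\<lambda>_. A)) = emeasure lborel (A \<inter> {0..1}) ^ n"
proof -
  interpret U: prob_space U by (rule U_prob)
  interpret product_sigma_finite "\<lambda>_::nat. U"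
    by unfold_locales
  have "emeasure (valM n) (PiE {..<n} (\<lambda>_. A)) = (\<Prod>i\<in>{..<n}. emeasure U A)"
    unfolding valM_def using assms by (intro emeasure_PiM) auto
  also have "emeasure U A = emeasure lborel (A \<inter> {0..1})"
    using assms by (simp add: Int_commute divide_ennreal_def)
  finally show ?thesis by simp
qed

definition clamp :: "real \<Rightarrow> real" where "clamp c = max 0 (min 1 c)"

lemma clamp_nonneg: "0 \<le> clamp c" by (simp add: clamp_def)

lemma lb_lt: "emeasure lborel ({..<c} \<inter> {0..1::real}) = ennreal (clamp c)"
proof (cases "c \<le> 0")
  case True
  then have "{..<c} \<inter> {0..1::real} = {}" by auto
  then show ?thesis using True by (simp add: clamp_def)
next
  case False
  show ?thesis
  proof (cases "c \<le> 1")
    case True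
    then have "{..<c} \<inter> {0..1::real} = {0..<c}" by auto
    then show ?thesis using True False by (simp add: clamp_def)
  next
    case F2: False
    then have "{..<c} \<inter> {0..1::real} = {0..1}" by auto
    then show ?thesis using F2 False by (simp add: clamp_def)
  qed
qed

lemma space_valM: "space (valM n) = PiE {..<n} (\<lambda>_. UNIV)"
  unfolding valM_def by (simp add: space_PiM)

lemma set_lt: "{x \<in> space (valM n). \<forall>i<n. x i < c} = PiE {..<n} (\<lambda>_. {..<c})"
  unfolding space_valM by (auto simp: PiE_def Pi_def)

lemma prob_lt: "measure (valM n) {x \<in> space (valM n). \<forall>i<n. x i < c} = clamp c ^ n"
proof -
  have "emeasure (valM n) {x \<in> space (valM n). \<forall>i<n. x i < c} = ennreal (clamp c ^ n)"
    unfolding set_lt by (simp add: box lb_lt ennreal_power clamp_nonneg)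
  then show ?thesis by (simp add: measure_def clamp_nonneg)
qed

lemma if_ind: "x \<in> space M \<Longrightarrow> (if P x then c else 0) = (c::real) * indicator {x \<in> space M. P x} x"
  unfolding indicator_def by simp

lemma nonint_eq: "nonint_utility n v b = (v - b) * clamp b ^ n"
proof -
  have "nonint_utility n v b = (\<integral>x. (v - b) * indicator {x \<in> space (valM n). \<forall>i<n. x i < b} x \<partial>valM n)"
    unfolding nonint_utility_def by (rule Bochner_Integration.integral_cong[OF refl if_ind])
  also have "\<dots> = (v - b) * measure (valM n) ({x \<in> space (valM n). \<forall>i<n. x i < b} \<inter> space (valM n))"
    by (simp only: integral_mult_right_zero Bochner_Integration.integral_indicator)
  also have "{x \<in> space (valM n). \<forall>i<n. x i < b} \<inter> space (valM n) = {x \<in> space (valM n). \<forall>i<n. x i < b}"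
    by blast
  finally show ?thesis by (simp only: prob_lt)
qed

lemma AE_nonneg: "AE x in valM n. \<forall>i<n. 0 \<le> x i"
proof -
  interpret prob_space "valM n" by (rule valM_prob)
  have "emeasure (valM n) (PiE {..<n} (\<lambda>_. {0..1})) = 1"
    by (simp add: box)
  then have "prob (PiE {..<n} (\<lambda>_. {0..1})) = 1" by (simp add: measure_def)
  then have "AE x in valM n. x \<in> PiE {..<n} (\<lambda>_. {0..1})" by (rule AE_prob_1)
  moreover have "\<And>x. x \<in> PiE {..<n} (\<lambda>_. {0..1::real}) \<Longrightarrow> (\<forall>i<n. 0 \<le> x i)"
    by (simp add: PiE_iff)
  ultimately show ?thesis by (rule eventually_mono)
qed

lemma powint: "0 \<le> v \<Longrightarrow> (\<integral>\<^sup>+ s. ennreal (s ^ n * indicator {0..v} s) \<partial>lborel) = ennreal (v ^ (n+1) / (real n + 1))"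
proof -
  assume v: "0 \<le> v"
  have int: "integrable lborel (\<lambda>s. s ^ n * indicator {0..v} s :: real)"
    by (intro borel_integrable_atLeastAtMost) auto
  have "(\<integral>\<^sup>+ s. ennreal (s ^ n * indicator {0..v} s) \<partial>lborel) = ennreal (\<integral>s. s ^ n * indicator {0..v} s \<partial>lborel)"
    using int by (intro nn_integral_eq_integral) (auto simp: indicator_def)
  also have "(\<integral>s. s ^ n * indicator {0..v} s \<partial>lborel) = v ^ (n+1) / (real n + 1)"
    using v by (subst integral_power) (auto simp: power_0_left)
  finally show ?thesis .
qed

lemma int_eq:
  assumes n: "0 < n" and v: "0 \<le> v" "v \<le> 1"
  shows "int_utility n v = v ^ (n + 1) / (real n + 1)"
proof -
  interpret M: prob_space "valM n" by (rule valM_prob)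
  interpret pair_sigma_finite "valM n" lborel
    by unfold_locales
  define f where "f x = (if (\<forall>i<n. x i < v) then v - (MAX i\<in>{..<n}. x i) else 0)" for x :: "nat \<Rightarrow> real"
  define g where "g x s = ennreal (if 0 \<le> s \<and> s \<le> v \<and> (\<forall>i<n. x i < s) then 1 else 0)" for x :: "nat \<Rightarrow> real" and s :: real
  have nemp: "{..<n} \<noteq> {}" using n by auto
  have fnn: "0 \<le> f x" for x
  proof (cases "\<forall>i<n. x i < v")
    case True
    have "(MAX i\<in>{..<n}. x i) \<in> (\<lambda>i. x i) ` {..<n}" using nemp by (intro Max_in) auto
    then show ?thesis using True by (auto simp: f_def)
  next
    case False
    then have "f x = 0" unfolding f_def by (rule if_not_P)
    then show ?thesis by simp
  qed
  have fmeas: "f \<in> borel_measurable (valM n)"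
    unfolding f_def valM_def by measurable
  have gmeas: "case_prod g \<in> borel_measurable (valM n \<Otimes>\<^sub>M lborel)"
    unfolding g_def valM_def by measurable
  have A: "AE x in valM n. ennreal (f x) = (\<integral>\<^sup>+ s. g x s \<partial>lborel)"
    using AE_nonneg[of n]
  proof eventually_elim
    case (elim x)
    define m where "m = (MAX i\<in>{..<n}. x i)"
    have m_in: "m \<in> (\<lambda>i. x i) ` {..<n}" unfolding m_def using nemp by (intro Max_in) auto
    then have m0: "0 \<le> m" using elim by auto
    have all: "(\<forall>i<n. x i < s) \<longleftrightarrow> m < s" for s
      unfolding m_def using nemp by (auto simp: Max_less_iff)
    have "g x s = indicator {m<..v} s" for s
      unfolding g_def all using m0 by (auto simp: indicator_def)
    then have "(\<integral>\<^sup>+ s. g x s \<partial>lborel) = emeasure lborel {m<..v}"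
      by simp
    also have "\<dots> = ennreal (f x)"
    proof (cases "m < v")
      case True
      then have "emeasure lborel {m<..v} = ennreal (v - m)" by simp
      moreover have "f x = v - m" using True all[of v] unfolding f_def m_def by simp
      ultimately show ?thesis by simp
    next
      case False
      then have "{m<..v} = {}" by auto
      moreover have "\<not>(\<forall>i<n. x i < v)" using all[of v] False by simp
      then have "f x = 0" unfolding f_def by (rule if_not_P)
      ultimately show ?thesis by simp
    qed
    finally show ?case by simp
  qed
  have B: "(\<integral>\<^sup>+ x. g x s \<partial>valM n) = ennreal (s ^ n * indicator {0..v} s)" for s
  proof (cases "0 \<le> s \<and> s \<le> v")
    case True
    have meas: "{x \<in> space (valM n). \<forall>i<n. x i < s} \<in> sets (valM n)"
    proof -
      have "PiE {..<n} (\<lambda>_. {..<s}) \<in> sets (valM n)"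
        unfolding valM_def by (intro sets_PiM_I_finite) auto
      then show ?thesis by (simp only: set_lt)
    qed
    have "(\<integral>\<^sup>+ x. g x s \<partial>valM n) = (\<integral>\<^sup>+ x. indicator {x \<in> space (valM n). \<forall>i<n. x i < s} x \<partial>valM n)"
      using True by (intro nn_integral_cong) (simp add: g_def indicator_def)
    also have "\<dots> = emeasure (valM n) {x \<in> space (valM n). \<forall>i<n. x i < s}"
      using meas by (rule nn_integral_indicator)
    also have "\<dots> = ennreal (clamp s ^ n)"
      unfolding M.emeasure_eq_measure prob_lt by (rule refl)
    also have "clamp s = s" using True v by (simp add: clamp_def)
    finally show ?thesis using True by simp
  next
    case False
    then have "g x s = 0" for x by (auto simp: g_def)
    then show ?thesis using False by (simp add: indicator_def)
  qed
  have "(\<integral>\<^sup>+ x. ennreal (f x) \<partial>valM n) = (\<integral>\<^sup>+ x. (\<integral>\<^sup>+ s. g x s \<partial>lborel) \<partial>valM n)"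
    using A by (rule nn_integral_cong_AE)
  also have "\<dots> = (\<integral>\<^sup>+ s. (\<integral>\<^sup>+ x. g x s \<partial>valM n) \<partial>lborel)"
    using Fubini'[OF gmeas] by simp
  also have "\<dots> = ennreal (v ^ (n+1) / (real n + 1))"
    by (simp add: B powint v)
  finally have nn: "(\<integral>\<^sup>+ x. ennreal (f x) \<partial>valM n) = ennreal (v ^ (n+1) / (real n + 1))" .
  have "int_utility n v = integral\<^sup>L (valM n) f"
    unfolding int_utility_def f_def ..
  also have "\<dots> = enn2real (\<integral>\<^sup>+ x. ennreal (f x) \<partial>valM n)"
    using fmeas fnn by (intro integral_eq_nn_integral) auto
  also have "\<dots> = v ^ (n+1) / (real n + 1)"
    using v by (simp add: nn)
  finally show ?thesis .
qed

lemma p_deriv: "((\<lambda>x. (v - x) * x ^ n) has_real_derivative (x ^ (n - 1) * (real n * v - (real n + 1) * x))) (at x)" if "0 < n" for v x :: real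
proof -
  have "((\<lambda>x. (v - x) * x ^ n) has_real_derivative (- 1 * x ^ n + (v - x) * (real n * x ^ (n - 1)))) (at x)"
    by (intro derivative_eq_intros) auto
  moreover have "- 1 * x ^ n + (v - x) * (real n * x ^ (n - 1)) = x ^ (n - 1) * (real n * v - (real n + 1) * x)"
  proof -
    have "x ^ n = x * x ^ (n - 1)" using that by (cases n) auto
    then show ?thesis by (simp add: algebra_simps)
  qed
  ultimately show ?thesis by simp
qed

lemma p_max:
  fixes v x :: real
  assumes n: "0 < n" and v: "0 \<le> v" and x: "0 \<le> x" and ne: "x \<noteq> real n / (real n + 1) * v"
  shows "(v - x) * x ^ n < (v - real n / (real n + 1) * v) * (real n / (real n + 1) * v) ^ n"
proof -
  define c where "c = real n / (real n + 1) * v"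
  have c0: "0 \<le> c" unfolding c_def using v by simp
  have key: "real n * v - (real n + 1) * y = (real n + 1) * (c - y)" for y
    unfolding c_def by (simp add: field_simps)
  have cont: "continuous_on A (\<lambda>x. (v - x) * x ^ n)" for A
    by (intro continuous_intros)
  show ?thesis
  proof (cases "x < c")
    case True
    have "(v - x) * x ^ n < (v - c) * c ^ n"
    proof (rule DERIV_pos_imp_increasing_open[OF True _ cont])
      fix y assume y: "x < y" "y < c"
      then have "0 < y" using x by simp
      then show "\<exists>d. ((\<lambda>x. (v - x) * x ^ n) has_real_derivative d) (at y) \<and> d > 0"
        using y by (intro exI[of _ "y ^ (n - 1) * (real n * v - (real n + 1) * y)"] conjI p_deriv[OF n]) (simp add: key)
    qed
    then show ?thesis by (simp add: c_def)
  next
    case False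
    then have lt: "c < x" using ne c_def by simp
    have "(v - c) * c ^ n > (v - x) * x ^ n"
    proof (rule DERIV_neg_imp_decreasing_open[OF lt _ cont])
      fix y assume y: "c < y" "y < x"
      then have "0 < y" using c0 by simp
      then show "\<exists>d. ((\<lambda>x. (v - x) * x ^ n) has_real_derivative d) (at y) \<and> d < 0"
        using y by (intro exI[of _ "y ^ (n - 1) * (real n * v - (real n + 1) * y)"] conjI p_deriv[OF n]) (simp add: key mult_pos_neg)
    qed
    then show ?thesis by (simp add: c_def)
  qed
qed

theorem mainTheorem2:
  fixes n :: nat and v :: real
  assumes "0 < n" and "0 \<le> v" and "v \<le> 1"
  shows "(\<forall>b. nonint_utility n v b \<le> nonint_utility n v (real n / (real n + 1) * v))
    \<and> (0 < v \<longrightarrow> (\<forall>b. nonint_utility n v b = nonint_utility n v (real n / (real n + 1) * v)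
                        \<longrightarrow> b = real n / (real n + 1) * v))
    \<and> nonint_utility n v (real n / (real n + 1) * v)
        = (real n / (real n + 1)) ^ n * v ^ (n + 1) / (real n + 1)
    \<and> int_utility n v = v ^ (n + 1) / (real n + 1)"
proof -
  note n = assms(1) and v = assms(2,3)
  define c where "c = real n / (real n + 1) * v"
  define p where "p x = (v - x) * x ^ n" for x
  have c0: "0 \<le> c" unfolding c_def using v by simp
  have c1: "c < 1"
  proof -
    have "real n / (real n + 1) < 1" by simp
    moreover have "real n / (real n + 1) * v \<le> real n / (real n + 1)"
      using v by (intro mult_left_le) auto
    ultimately have "real n / (real n + 1) * v < 1" by linarith
    then show ?thesis unfolding c_def by simp
  qed
  have hc: "nonint_utility n v c = p c"
    unfolding nonint_eq p_def using c0 c1 by (simp add: clamp_def)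
  have pmax: "x \<noteq> c \<Longrightarrow> 0 \<le> x \<Longrightarrow> p x < p c" for x
    unfolding p_def c_def using p_max[OF n v(1)] by blast
  have strict: "nonint_utility n v b < nonint_utility n v c" if "b \<noteq> c" "b > 0" for b
  proof (cases "b < 1")
    case True
    then have "nonint_utility n v b = p b" unfolding nonint_eq p_def using that by (simp add: clamp_def)
    then show ?thesis using hc pmax[of b] that by simp
  next
    case False
    then have "nonint_utility n v b = v - b" unfolding nonint_eq by (simp add: clamp_def)
    also have "\<dots> \<le> p 1" unfolding p_def using False by simp
    also have "\<dots> < p c" using pmax[of 1] c1 by simp
    finally show ?thesis using hc by simp
  qed
  have nonpos: "b \<le> 0 \<Longrightarrow> nonint_utility n v b = p 0" for b
    unfolding nonint_eq p_def using n by (simp add: clamp_def)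
  have p0: "p 0 \<le> p c" using pmax[of 0] by (cases "c = 0") auto
  have part1: "\<forall>b. nonint_utility n v b \<le> nonint_utility n v c"
  proof
    fix b
    show "nonint_utility n v b \<le> nonint_utility n v c"
    proof (cases "b \<le> 0")
      case True then show ?thesis using nonpos p0 hc by simp
    next
      case False then show ?thesis using strict[of b] by (cases "b = c") auto
    qed
  qed
  have part2: "0 < v \<longrightarrow> (\<forall>b. nonint_utility n v b = nonint_utility n v c \<longrightarrow> b = c)"
  proof (intro impI allI)
    fix b assume vp: "0 < v" and eq: "nonint_utility n v b = nonint_utility n v c"
    have cp: "0 < c" unfolding c_def using vp n by simp
    show "b = c"
    proof (rule ccontr)
      assume ne: "b \<noteq> c"
      show False
      proof (cases "b \<le> 0")
        case True
        then show False using nonpos[OF True] pmax[of 0] cp hc eq by simp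
      next
        case False then show False using strict[of b] ne eq by simp
      qed
    qed
  qed
  have part3: "nonint_utility n v c = (real n / (real n + 1)) ^ n * v ^ (n + 1) / (real n + 1)"
  proof -
    have "v - c = v / (real n + 1)" unfolding c_def by (simp add: field_simps)
    then have "p c = v / (real n + 1) * ((real n / (real n + 1)) ^ n * v ^ n)"
      unfolding p_def c_def by (simp only: power_mult_distrib)
    also have "\<dots> = (real n / (real n + 1)) ^ n * v ^ (n + 1) / (real n + 1)"
      by (simp add: field_simps)
    finally show ?thesis using hc by simp
  qed
  show ?thesis
    using part1 part2 part3 int_eq[OF n v] unfolding c_def by blast
qed

end
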